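(* Let $m,k\ge 1$ and let $\Delta\in\mathbb{R}^{m\times k}$ be a matrix such that (a) each row of $\Delta$ has at most one nonzero entry, and (b) for every column index $i\in\{1,\dots,k\}$ there exists a row $a$ with $\Delta_{a,i}\neq 0$. Let $\mathbf{L}\in\mathbb{R}^{k\times k}$ be invertible and set $\hat\Delta:=\Delta\mathbf{L}$. If $\|\hat\Delta\|_0\le\|\Delta\|_0$, then $\mathbf{L}$ is a permutation-scaling matrix, i.e. $\mathbf{L}=\mathbf{P}\mathbf{D}$ for a permutation matrix $\mathbf{P}$ and an invertible diagonal matrix $\mathbf{D}$.
   Context: $\|M\|_0$ denotes the number of nonzero entries of a matrix $M$. In the paper, the rows of $\Delta$ are the parameter-change vectors $\delta_a$ indexed by the arcs $a$ of a tree of environments (so $m=|\mathcal{A}|$), and $k$ is the latent dimension. *)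

theory Defs
  imports "HOL-Analysis.Analysis"
begin

definition nnz :: "real^'n^'m \<Rightarrow> nat" where
  "nnz M = card {(a, i). M $ a $ i \<noteq> 0}"

definition permutation_matrix :: "real^'n^'n \<Rightarrow> bool" where
  "permutation_matrix P \<longleftrightarrow>
     (\<exists>\<sigma>. bij \<sigma> \<and> (\<forall>i j. P $ i $ j = (if i = \<sigma> j then 1 else 0)))"

definition diagonal_matrix :: "real^'n^'n \<Rightarrow> bool" where
  "diagonal_matrix D \<longleftrightarrow> (\<forall>i j. i \<noteq> j \<longrightarrow> D $ i $ j = 0)"

end

theory Submission
  imports Defs
begin

lemma nnz_rows: "nnz (M::real^'n^'m) = (\<Sum>a\<in>UNIV. card {i. M $ a $ i \<noteq> 0})"
proof -
  have "{(a, i). M $ a $ i \<noteq> 0} = (SIGMA a:UNIV. {i. M $ a $ i \<noteq> 0})" by auto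
  then show ?thesis unfolding nnz_def by (simp add: card_SigmaI)
qed

lemma inv_row_nz:
  fixes L :: "real^'k^'k"
  assumes "invertible L" shows "\<exists>j. L $ i $ j \<noteq> 0"
proof (rule ccontr)
  assume h: "\<not> ?thesis"
  obtain B where B: "L ** B = mat 1" using assms invertible_right_inverse by blast
  have "(L ** B) $ i $ i = 0" using h by (simp add: matrix_matrix_mult_def)
  then show False using B by (simp add: mat_def)
qed

lemma inv_col_nz:
  fixes L :: "real^'k^'k"
  assumes "invertible L" shows "\<exists>i. L $ i $ j \<noteq> 0"
proof (rule ccontr)
  assume h: "\<not> ?thesis"
  obtain B where B: "B ** L = mat 1" using assms invertible_left_inverse by blast
  have "(B ** L) $ j $ j = 0" using h by (simp add: matrix_matrix_mult_def)
  then show False using B by (simp add: mat_def)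
qed

theorem proposition4p7:
  fixes \<Delta> :: "real^'k^'m" and L :: "real^'k^'k"
  assumes rows: "\<forall>a. card {i. \<Delta> $ a $ i \<noteq> 0} \<le> 1"
    and cols: "\<forall>i. \<exists>a. \<Delta> $ a $ i \<noteq> 0"
    and inv: "invertible L"
    and sparse: "nnz (\<Delta> ** L) \<le> nnz \<Delta>"
  shows "\<exists>P D. permutation_matrix P \<and> diagonal_matrix D \<and> invertible D \<and> L = P ** D"
proof -
  have rowsing: "{j. \<Delta> $ a $ j \<noteq> 0} = {i}" if "\<Delta> $ a $ i \<noteq> 0" for a i
  proof -
    have "card {j. \<Delta> $ a $ j \<noteq> 0} \<le> 1" using rows by blast
    moreover have "i \<in> {j. \<Delta> $ a $ j \<noteq> 0}" using that by simp
    ultimately have "\<forall>x\<in>{j. \<Delta> $ a $ j \<noteq> 0}. \<forall>y\<in>{j. \<Delta> $ a $ j \<noteq> 0}. x = y"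
      using card_le_Suc0_iff_eq[of "{j. \<Delta> $ a $ j \<noteq> 0}"] by simp
    then show ?thesis using that by blast
  qed
  have prodrow: "(\<Delta> ** L) $ a $ j = \<Delta> $ a $ i * L $ i $ j" if "\<Delta> $ a $ i \<noteq> 0" for a i j
  proof -
    have "(\<Delta> ** L) $ a $ j = (\<Sum>l\<in>UNIV. \<Delta> $ a $ l * L $ l $ j)"
      by (simp add: matrix_matrix_mult_def)
    also have "\<dots> = \<Delta> $ a $ i * L $ i $ j"
    proof -
      have z: "\<Delta> $ a $ l = 0" if "l \<noteq> i" for l using rowsing[OF \<open>\<Delta> $ a $ i \<noteq> 0\<close>] that by blast
      have "(\<Sum>l\<in>UNIV. \<Delta> $ a $ l * L $ l $ j) = \<Delta> $ a $ i * L $ i $ j + (\<Sum>l\<in>UNIV - {i}. \<Delta> $ a $ l * L $ l $ j)"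
        by (rule sum.remove) auto
      also have "(\<Sum>l\<in>UNIV - {i}. \<Delta> $ a $ l * L $ l $ j) = 0"
        using z by (intro sum.neutral) auto
      finally show ?thesis by simp
    qed
    finally show ?thesis .
  qed
  let ?f = "\<lambda>a. card {i. \<Delta> $ a $ i \<noteq> 0}"
  let ?g = "\<lambda>a. card {j. (\<Delta> ** L) $ a $ j \<noteq> 0}"
  have rowcard: "?g a = card {j. L $ i $ j \<noteq> 0}" if "\<Delta> $ a $ i \<noteq> 0" for a i
    using prodrow[OF that] that by simp
  have le: "?f a \<le> ?g a" for a
  proof (cases "\<exists>i. \<Delta> $ a $ i \<noteq> 0")
    case True
    then obtain i where i: "\<Delta> $ a $ i \<noteq> 0" by blast
    obtain j where "L $ i $ j \<noteq> 0" using inv_row_nz[OF inv] by blast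
    then have "{j. L $ i $ j \<noteq> 0} \<noteq> {}" by blast
    then have "card {j. L $ i $ j \<noteq> 0} \<ge> 1"
      using card_gt_0_iff[of "{j. L $ i $ j \<noteq> 0}"] by simp
    then show ?thesis using rowcard[OF i] rowsing[OF i] by simp
  next
    case False
    then show ?thesis by simp
  qed
  have eq: "?f a = ?g a" for a
  proof (rule ccontr)
    assume "?f a \<noteq> ?g a"
    then have "?f a < ?g a" using le[of a] by simp
    then have "sum ?f UNIV < sum ?g UNIV"
      by (intro sum_strict_mono_ex1) (auto intro: le)
    then show False using sparse by (simp add: nnz_rows)
  qed
  have one: "\<exists>t. {j. L $ i $ j \<noteq> 0} = {t}" for i
  proof -
    obtain a where a: "\<Delta> $ a $ i \<noteq> 0" using cols by blast
    have "card {j. L $ i $ j \<noteq> 0} = Suc 0"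
      using eq[of a] rowcard[OF a] rowsing[OF a] by simp
    then show ?thesis by (simp add: card_1_singleton_iff)
  qed
  then obtain \<tau> where tau: "\<And>i. {j. L $ i $ j \<noteq> 0} = {\<tau> i}" by metis
  have Lnz: "L $ i $ j \<noteq> 0 \<longleftrightarrow> j = \<tau> i" for i j
    using tau[of i] by blast
  have "surj \<tau>"
  proof -
    have "j \<in> range \<tau>" for j
      using inv_col_nz[OF inv, of j] Lnz by blast
    then show ?thesis by blast
  qed
  then have "inj \<tau>" using finite_UNIV_surj_inj[of \<tau>] by simp
  with \<open>surj \<tau>\<close> have bt: "bij \<tau>" by (simp add: bij_def)
  define \<sigma> where "\<sigma> = inv \<tau>"
  have bs: "bij \<sigma>" unfolding \<sigma>_def using bt bij_imp_bij_inv by blast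
  have ts: "\<tau> (\<sigma> j) = j" for j unfolding \<sigma>_def using bt by (simp add: surj_f_inv_f inv_f_f bij_is_surj bij_is_inj)
  have st: "\<sigma> (\<tau> i) = i" for i unfolding \<sigma>_def using bt by (simp add: surj_f_inv_f inv_f_f bij_is_surj bij_is_inj)
  define P :: "real^'k^'k" where "P = (\<chi> i j. if i = \<sigma> j then 1 else 0)"
  define D :: "real^'k^'k" where "D = (\<chi> i j. if i = j then L $ (\<sigma> j) $ j else 0)"
  have pm: "permutation_matrix P" unfolding permutation_matrix_def P_def using bs by auto
  have dm: "diagonal_matrix D" unfolding diagonal_matrix_def D_def by auto
  have "det D = (\<Prod>i\<in>UNIV. D $ i $ i)"
    by (rule det_diagonal) (simp add: D_def)
  also have "\<dots> \<noteq> 0"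
    using Lnz ts by (simp add: D_def)
  finally have di: "invertible D" by (simp add: invertible_det_nz)
  have "L = P ** D"
  proof -
    have "(P ** D) $ i $ j = L $ i $ j" for i j
    proof -
      have "(P ** D) $ i $ j = (\<Sum>l\<in>UNIV. P $ i $ l * D $ l $ j)"
        by (simp add: matrix_matrix_mult_def)
      also have "\<dots> = P $ i $ j * D $ j $ j"
        by (simp add: D_def if_distrib cong: if_cong)
      also have "\<dots> = L $ i $ j"
        using Lnz[of i j] ts st by (auto simp: P_def D_def)
      finally show ?thesis .
    qed
    then show ?thesis by (simp add: vec_eq_iff)
  qed
  then show ?thesis using pm dm di by blast
qed

end
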